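(* Let $\mathbb{S}=(S,\Sigma,\{\tau_a\mid a\in L\})$ be a labelled Markov process. Then $\mathcal{R}^T(\sigma(\llbracket\mathcal{L}\rrbracket))=\mathcal{R}(\sigma(\llbracket\mathcal{L}\rrbracket))$.
   Context: A labelled Markov process (LMP) is a triple $\mathbb{S}=(S,\Sigma,\{\tau_a\mid a\in L\})$ where $(S,\Sigma)$ is a measurable space, $L$ is a countable set of labels, and each $\tau_a:S\times\Sigma\to[0,1]$ is a Markov kernel: $\tau_a(s,\cdot)$ is a subprobability measure on $\Sigma$ for every $s\in S$, and $\tau_a(\cdot,X)$ is $\Sigma$-measurable for every $X\in\Sigma$. For a family $\Gamma\subseteq\mathcal{P}(S)$, $\mathcal{R}(\Gamma)=\{(s,t)\in S\times S:\forall A\in\Gamma\ (s\in A\iff t\in A)\}$. For $\Lambda\subseteq\Sigma$, $\mathcal{R}^T(\Lambda)=\{(s,t)\in S\times S:\forall a\in L\ \forall E\in\Lambda\ \tau_a(s,E)=\tau_a(t,E)\}$. The logic $\mathcal{L}$ has formulas $\phi::=\top\mid\phi_1\wedge\phi_2\mid\langle a\rangle_{>q}\phi$ with $a\in L$ and $q\in\mathbb{Q}\cap[0,1]$, interpreted by $\llbracket\top\rrbracket=S$, $\llbracket\phi\wedge\psi\rrbracket=\llbracket\phi\rrbracket\cap\llbracket\psi\rrbracket$, $\llbracket\langle a\rangle_{>q}\phi\rrbracket=\{s\in S:\tau_a(s,\llbracket\phi\rrbracket)>q\}$ (all these sets lie in $\Sigma$). $\sigma(\llbracket\mathcal{L}\rrbracket)$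 denotes the $\sigma$-algebra generated by all sets $\llbracket\phi\rrbracket$. *)

theory Defs
  imports "HOL-Probability.Probability"
begin

text \<open>A labelled Markov process on the measurable space M with countable label type 'l:
  each tau a is a Markov kernel, i.e. a measurable map from M into the space of
  subprobability measures on M (this encodes both that tau a s is a subprobability
  measure on the sets of M and that s maps to tau a s (X) measurably).\<close>
definition LMP :: "'a measure \<Rightarrow> ('l::countable \<Rightarrow> 'a \<Rightarrow> 'a measure) \<Rightarrow> bool" where
  "LMP M tau \<longleftrightarrow> (\<forall>a. tau a \<in> M \<rightarrow>\<^sub>M subprob_algebra M)"

datatype 'l form = FTop | FAnd "'l form" "'l form" | FDia 'l rat "'l form"

fun wf_form :: "'l form \<Rightarrow> bool" where
  "wf_form FTop = True"
| "wf_form (FAnd p1 p2) = (wf_form p1 \<and> wf_form p2)"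
| "wf_form (FDia a q p) = (0 \<le> q \<and> q \<le> 1 \<and> wf_form p)"

fun sem :: "'a measure \<Rightarrow> ('l \<Rightarrow> 'a \<Rightarrow> 'a measure) \<Rightarrow> 'l form \<Rightarrow> 'a set" where
  "sem M tau FTop = space M"
| "sem M tau (FAnd p1 p2) = sem M tau p1 \<inter> sem M tau p2"
| "sem M tau (FDia a q p) =
     {s \<in> space M. measure (tau a s) (sem M tau p) > real_of_rat q}"

definition sigma_L :: "'a measure \<Rightarrow> ('l \<Rightarrow> 'a \<Rightarrow> 'a measure) \<Rightarrow> 'a set set" where
  "sigma_L M tau = sigma_sets (space M) {sem M tau p | p. wf_form p}"

definition Rel :: "'a set \<Rightarrow> 'a set set \<Rightarrow> ('a \<times> 'a) set" where
  "Rel S Fam = {(s, t). s \<in> S \<and> t \<in> S \<and> (\<forall>A\<in>Fam. s \<in> A \<longleftrightarrow> t \<in> A)}"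

definition RelT :: "'a measure \<Rightarrow> ('l \<Rightarrow> 'a \<Rightarrow> 'a measure) \<Rightarrow> 'a set set \<Rightarrow> ('a \<times> 'a) set" where
  "RelT M tau Lam = {(s, t). s \<in> space M \<and> t \<in> space M \<and>
     (\<forall>a. \<forall>E\<in>Lam. measure (tau a s) E = measure (tau a t) E)}"

end

theory Submission
  imports Defs
begin

lemma sem_sets:
  assumes "LMP M tau"
  shows "sem M tau p \<in> sets M"
proof (induction p)
  case FTop then show ?case by simp
next
  case (FAnd p1 p2) then show ?case by auto
next
  case (FDia a q p)
  have k: "tau a \<in> M \<rightarrow>\<^sub>M subprob_algebra M" using assms unfolding LMP_def by auto
  have e: "(\<lambda>N. emeasure N (sem M tau p)) \<in> borel_measurable (subprob_algebra M)"
    using FDia by (rule measurable_emeasure_subprob_algebra)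
  then have "(\<lambda>s. emeasure (tau a s) (sem M tau p)) \<in> borel_measurable M"
    using measurable_comp[OF k e] by (simp add: comp_def)
  then have "(\<lambda>s. enn2real (emeasure (tau a s) (sem M tau p))) \<in> borel_measurable M"
    by (rule borel_measurable_enn2real)
  then have m: "(\<lambda>s. measure (tau a s) (sem M tau p)) \<in> borel_measurable M"
    by (simp add: measure_def)
  have "{s \<in> space M. real_of_rat q < measure (tau a s) (sem M tau p)} \<in> sets M"
    using m by measurable
  then show ?case by simp
qed

lemma sigmaL_sub:
  assumes "LMP M tau"
  shows "sigma_L M tau \<subseteq> sets M"
  unfolding sigma_L_def
  using sem_sets[OF assms]
  by (intro sets.sigma_sets_subset) auto

theorem lemma3p4:
  fixes M :: "'a measure" and tau :: "'l::countable \<Rightarrow> 'a \<Rightarrow> 'a measure"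
  assumes "LMP M tau"
  shows "RelT M tau (sigma_L M tau) = Rel (space M) (sigma_L M tau)"
  (is "?L = ?R")
proof
  have k: "\<And>a. tau a \<in> M \<rightarrow>\<^sub>M subprob_algebra M" using assms unfolding LMP_def by auto
  have sets_t: "\<And>a s. s \<in> space M \<Longrightarrow> sets (tau a s) = sets M"
    using k by (rule subprob_measurableD)
  have space_t: "\<And>a s. s \<in> space M \<Longrightarrow> space (tau a s) = space M"
    using k by (rule subprob_measurableD)
  have sp_t: "\<And>a s. s \<in> space M \<Longrightarrow> subprob_space (tau a s)"
    using k by (rule subprob_space_kernel)
  let ?G = "{sem M tau p | p. wf_form p}"
  have Gsub: "?G \<subseteq> Pow (space M)" using sem_sets[OF assms] sets.sets_into_space by blast
  have IntG: "Int_stable ?G"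
  proof (rule Int_stableI)
    fix A B assume "A \<in> ?G" "B \<in> ?G"
    then obtain p1 p2 where "A = sem M tau p1" "wf_form p1" "B = sem M tau p2" "wf_form p2" by auto
    then show "A \<inter> B \<in> ?G" by (auto intro!: exI[of _ "FAnd p1 p2"])
  qed
  show "?L \<subseteq> ?R"
  proof safe
    fix s t assume st: "(s, t) \<in> ?L"
    then have s: "s \<in> space M" and t: "t \<in> space M"
      and eq: "\<And>a E. E \<in> sigma_L M tau \<Longrightarrow> measure (tau a s) E = measure (tau a t) E"
      unfolding RelT_def by auto
    have semin: "sem M tau p \<in> sigma_L M tau" if "wf_form p" for p
      unfolding sigma_L_def using that by (auto intro: sigma_sets.Basic)
    have gen: "s \<in> sem M tau p \<longleftrightarrow> t \<in> sem M tau p" if "wf_form p" for p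
      using that
    proof (induction p)
      case (FDia a q p)
      then have "measure (tau a s) (sem M tau p) = measure (tau a t) (sem M tau p)"
        using eq semin by auto
      then show ?case using s t by simp
    qed (use s t in auto)
    have "s \<in> A \<longleftrightarrow> t \<in> A" if "A \<in> sigma_L M tau" for A
      using that unfolding sigma_L_def
    proof (induction rule: sigma_sets.induct)
      case (Basic a) then show ?case using gen by auto
    next
      case (Compl a) then show ?case using s t by auto
    next
      case (Union a) then show ?case by auto
    qed auto
    then show "(s, t) \<in> ?R" unfolding Rel_def using s t by auto
  qed
  show "?R \<subseteq> ?L"
  proof safe
    fix s t assume st: "(s, t) \<in> ?R"
    then have s: "s \<in> space M" and t: "t \<in> space M"
      and ag: "\<And>A. A \<in> sigma_L M tau \<Longrightarrow> s \<in> A \<longleftrightarrow> t \<in> A"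
      unfolding Rel_def by auto
    have semin: "sem M tau p \<in> sigma_L M tau" if "wf_form p" for p
      unfolding sigma_L_def using that by (auto intro: sigma_sets.Basic)
    have "measure (tau a s) E = measure (tau a t) E" if E: "E \<in> sigma_L M tau" for a E
    proof -
      interpret S: subprob_space "tau a s" using sp_t[OF s] .
      interpret T: subprob_space "tau a t" using sp_t[OF t] .
      have basicG: "measure (tau a s) X = measure (tau a t) X" if "X \<in> ?G" for X
      proof -
        obtain p where p: "X = sem M tau p" "wf_form p" using \<open>X \<in> ?G\<close> by auto
        define x where "x = measure (tau a s) X"
        define y where "y = measure (tau a t) X"
        have x01: "0 \<le> x" "x \<le> 1" unfolding x_def by (auto intro: S.subprob_measure_le_1)
        have y01: "0 \<le> y" "y \<le> 1" unfolding y_def by (auto intro: T.subprob_measure_le_1)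
        have sw: "real_of_rat r < x \<longleftrightarrow> real_of_rat r < y" if "0 \<le> r" "r \<le> 1" for r
        proof -
          have "wf_form (FDia a r p)" using that p by simp
          then have "s \<in> sem M tau (FDia a r p) \<longleftrightarrow> t \<in> sem M tau (FDia a r p)"
            using ag semin by blast
          then show ?thesis using s t p unfolding x_def y_def by simp
        qed
        have "\<not> x < y"
        proof
          assume "x < y"
          then obtain r where r: "x < real_of_rat r" "real_of_rat r < y" using of_rat_dense by blast
          then have "0 \<le> r" "r \<le> 1" using x01 y01
            by (metis less_eq_real_def of_rat_less_eq order.trans of_rat_0 of_rat_1 linorder_not_le)+
          with sw[of r] r show False by linarith
        qed
        moreover have "\<not> y < x"
        proof
          assume "y < x"
          then obtain r where r: "y < real_of_rat r" "real_of_rat r < x" using of_rat_dense by blast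
          then have "0 \<le> r" "r \<le> 1" using x01 y01
            by (metis less_eq_real_def of_rat_less_eq order.trans of_rat_0 of_rat_1 linorder_not_le)+
          with sw[of r] r show False by linarith
        qed
        ultimately show ?thesis unfolding x_def y_def by simp
      qed
      have "emeasure (tau a s) E = emeasure (tau a t) E"
        using IntG Gsub E[unfolded sigma_L_def]
      proof (induction rule: sigma_sets_induct_disjoint)
        case (basic A)
        then show ?case using basicG[OF basic.hyps] by (simp add: S.emeasure_eq_measure T.emeasure_eq_measure)
      next
        case empty then show ?case by simp
      next
        case (compl A)
        have A: "A \<in> sets M" using compl.hyps sigmaL_sub[OF assms] unfolding sigma_L_def by blast
        have "space M \<in> ?G" by (auto intro!: exI[of _ FTop])
        then have sp: "emeasure (tau a s) (space M) = emeasure (tau a t) (space M)"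
          using basicG by (simp add: S.emeasure_eq_measure T.emeasure_eq_measure)
        have "emeasure (tau a s) (space M - A) = emeasure (tau a s) (space M) - emeasure (tau a s) A"
          using emeasure_compl[of A "tau a s"] S.emeasure_finite A sets_t[OF s] space_t[OF s] by simp
        moreover have "emeasure (tau a t) (space M - A) = emeasure (tau a t) (space M) - emeasure (tau a t) A"
          using emeasure_compl[of A "tau a t"] T.emeasure_finite A sets_t[OF t] space_t[OF t] by simp
        ultimately show ?case using sp compl.IH by simp
      next
        case (union A)
        have A: "range A \<subseteq> sets M" using union.hyps sigmaL_sub[OF assms] unfolding sigma_L_def by blast
        have "emeasure (tau a s) (\<Union>i. A i) = (\<Sum>i. emeasure (tau a s) (A i))"
          using suminf_emeasure[of A "tau a s"] A union.hyps sets_t[OF s] by simp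
        moreover have "emeasure (tau a t) (\<Union>i. A i) = (\<Sum>i. emeasure (tau a t) (A i))"
          using suminf_emeasure[of A "tau a t"] A union.hyps sets_t[OF t] by simp
        ultimately show ?case using union.IH by simp
      qed
      then show ?thesis by (simp add: measure_def)
    qed
    then show "(s, t) \<in> ?L" unfolding RelT_def using s t by auto
  qed
qed

end
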